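(* Let $\mathfrak a\subset K$ be a fractional $A_{\infty_1}$-ideal having an $\mathbb F_q$-basis $(\alpha_0=1,\alpha_1,\alpha_2,\dots)$ with $1<|\alpha_1|<|\alpha_2|<\cdots$, and let $\Omega_i^{\mathfrak a}(m)=\sum_{(c_0,\dots,c_{i-1})\in\mathbb F_q^i}(c_0+c_1\alpha_1+\dots+c_{i-1}\alpha_{i-1}+\alpha_i)^{-m}$. Put $\hat\zeta^{\mathfrak a}(m)=\sum_{i\ge1}\Omega_i^{\mathfrak a}(m)$. Then for all $n\in\mathbb N$, $n\ge1$, \[|\hat\zeta^{\mathfrak a}(q^n-1)|=|\Omega_1^{\mathfrak a}(q^n-1)|=|\alpha_1|^{q^n(1-q)}<1.\]
   Context: Let $q$ be a prime power, $k=\mathbb F_q(T)$, $A=\mathbb F_q[T]$, $k_\infty=\mathbb F_q((1/T))$ with $|x|=q^{\deg_T x}$. Let $f\in k_\infty\setminus k$ be a root of $X^2-aX-b$ with $a\in A$ monic, $d=\deg_T a\ge1$, $b\in\mathbb F_q^*$, $|f|=q^d$; $K=k(f)\subset k_\infty$ and $A_{\infty_1}=\mathbb F_q[f,fT,\dots,fT^{d-1}]$ is the ring of elements of $K$ regular away from the place induced by $K\subset k_\infty$. (In the paper's normalization, where the $\alpha_i$ are quotients of monic elements, $\hat\zeta^{\mathfrak a}(m)$ equals the zeta sum over monic elements of $\mathfrak a$ minus $1$.) *)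

theory Defs
  imports "HOL-Computational_Algebra.Computational_Algebra" "HOL-Library.FuncSet" "HOL-Library.Cardinality"
begin

text \<open>k_infinity = F_q((1/T)) is modelled as the Laurent series 'a fls in the
variable u = 1/T, so T = fls_X_inv.  q = CARD('a).\<close>

definition absv :: "'a::{field,finite} fls \<Rightarrow> real" where
  "absv x = (if x = 0 then 0 else real CARD('a) powi (- fls_subdegree x))"

definition polyT :: "'a::{field,finite} poly \<Rightarrow> 'a fls" where
  "polyT p = (\<Sum>i\<le>degree p. fls_const (coeff p i) * fls_X_inv ^ i)"

definition kfield :: "'a::{field,finite} fls set" where
  "kfield = {polyT P / polyT Q | P Q. Q \<noteq> 0}"

definition Kfield :: "'a::{field,finite} fls \<Rightarrow> 'a fls set" where
  "Kfield f = {x + y * f | x y. x \<in> kfield \<and> y \<in> kfield}"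

inductive_set Ainf1 :: "'a::{field,finite} fls \<Rightarrow> nat \<Rightarrow> 'a fls set" for f d where
  const: "fls_const c \<in> Ainf1 f d"
| gen: "j < d \<Longrightarrow> f * fls_X_inv ^ j \<in> Ainf1 f d"
| add: "x \<in> Ainf1 f d \<Longrightarrow> y \<in> Ainf1 f d \<Longrightarrow> x + y \<in> Ainf1 f d"
| mult: "x \<in> Ainf1 f d \<Longrightarrow> y \<in> Ainf1 f d \<Longrightarrow> x * y \<in> Ainf1 f d"

definition fractional_ideal :: "'a::field set \<Rightarrow> 'a set \<Rightarrow> 'a set \<Rightarrow> bool" where
  "fractional_ideal R K I \<longleftrightarrow> I \<subseteq> K \<and> I \<noteq> {0} \<and> 0 \<in> I \<and>
     (\<forall>x\<in>I. \<forall>y\<in>I. x + y \<in> I) \<and> (\<forall>r\<in>R. \<forall>x\<in>I. r * x \<in> I) \<and>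
     (\<exists>c\<in>R. c \<noteq> 0 \<and> (\<forall>x\<in>I. c * x \<in> R))"

definition Fq_basis :: "(nat \<Rightarrow> 'a::{field,finite} fls) \<Rightarrow> 'a fls set \<Rightarrow> bool" where
  "Fq_basis \<alpha> I \<longleftrightarrow> (\<forall>i. \<alpha> i \<in> I) \<and>
     (\<forall>x\<in>I. \<exists>!c::nat \<Rightarrow> 'a. finite {i. c i \<noteq> 0} \<and>
        x = (\<Sum>i\<in>{i. c i \<noteq> 0}. fls_const (c i) * \<alpha> i))"

definition Omega :: "(nat \<Rightarrow> 'a::{field,finite} fls) \<Rightarrow> nat \<Rightarrow> nat \<Rightarrow> 'a fls" where
  "Omega \<alpha> i m = (\<Sum>c\<in>({..<i} \<rightarrow>\<^sub>E (UNIV::'a set)).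
      inverse ((\<Sum>j<i. fls_const (c j) * \<alpha> j) + \<alpha> i) ^ m)"

definition fls_sums :: "(nat \<Rightarrow> 'a::{field,finite} fls) \<Rightarrow> 'a fls \<Rightarrow> bool" where
  "fls_sums g S \<longleftrightarrow> (\<lambda>n. absv (S - (\<Sum>i<n. g i))) \<longlonglongrightarrow> 0"

end

theory Submission
  imports Defs
begin


lemma q_ge2: "CARD('a::{field,finite}) \<ge> 2"
proof -
  have "{0::'a, 1} \<subseteq> UNIV" by simp
  hence "card {0::'a,1} \<le> CARD('a)" by (intro card_mono) auto
  thus ?thesis by simp
qed

lemma powi_split: "(x::real) \<noteq> 0 \<Longrightarrow> x powi (- a - b) = x powi (- a) * x powi (- b)"
  using power_int_add[of x "-a" "-b"] by simp

lemma qpowi_le_iff: "(x::real) > 1 \<Longrightarrow> x powi a \<le> x powi b \<longleftrightarrow> a \<le> b"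
  by (meson linorder_not_le power_int_increasing power_int_strict_increasing order_less_imp_le)

lemma qpowi_less_iff: "(x::real) > 1 \<Longrightarrow> x powi a < x powi b \<longleftrightarrow> a < b"
proof
  assume "1 < x" "x powi a < x powi b"
  show "a < b"
  proof (rule ccontr)
    assume "\<not> a < b"
    hence "x powi b \<le> x powi a" using \<open>1 < x\<close> by (intro power_int_increasing) auto
    thus False using \<open>x powi a < x powi b\<close> by simp
  qed
qed (rule power_int_strict_increasing)

lemma absv_0 [simp]: "absv (0::'a::{field,finite} fls) = 0"
  by (simp add: absv_def)

lemma absv_nz: "(x::'a::{field,finite} fls) \<noteq> 0 \<Longrightarrow> absv x = real CARD('a) powi (- fls_subdegree x)"
  by (simp add: absv_def)

lemma absv_pos: "(x::'a::{field,finite} fls) \<noteq> 0 \<Longrightarrow> absv x > 0"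
  using q_ge2[where 'a='a] by (simp add: absv_def)

lemma absv_ge0: "absv (x::'a::{field,finite} fls) \<ge> 0"
  by (cases "x = 0") (auto dest: absv_pos)

lemma absv_eq0_iff [simp]: "absv (x::'a::{field,finite} fls) = 0 \<longleftrightarrow> x = 0"
  by (metis absv_0 absv_pos less_irrefl)

lemma absv_mult: fixes x y :: "'a::{field,finite} fls" shows "absv (x * y) = absv x * absv y"
proof (cases "x = 0 \<or> y = 0")
  case False
  have q: "real CARD('a) \<noteq> 0" using q_ge2[where 'a='a] by simp
  then show ?thesis using False by (simp add: absv_def powi_split)
qed auto

lemma absv_inverse: "absv (inverse (x::'a::{field,finite} fls)) = inverse (absv x)"
proof (cases "x = 0")
  case False
  then show ?thesis using q_ge2[where 'a='a]
    by (simp add: absv_def power_int_minus)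
qed auto

lemma absv_power: "absv ((x::'a::{field,finite} fls) ^ n) = absv x ^ n"
proof (induction n)
  case 0 then show ?case by (simp add: absv_def)
next
  case (Suc n) then show ?case by (simp add: absv_mult)
qed

lemma absv_uminus [simp]: "absv (- (x::'a::{field,finite} fls)) = absv x"
  by (simp add: absv_def)

lemma absv_const: "c \<noteq> 0 \<Longrightarrow> absv (fls_const (c::'a::{field,finite})) = 1"
  by (simp add: absv_def fls_const_nonzero)

lemma absv_const_le: "absv (fls_const (c::'a::{field,finite})) \<le> 1"
  by (cases "c = 0") (auto simp: absv_const)

lemma absv_le_iff:
  fixes x y :: "'a::{field,finite} fls"
  assumes "x \<noteq> 0" "y \<noteq> 0"
  shows "absv x \<le> absv y \<longleftrightarrow> fls_subdegree y \<le> fls_subdegree x"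
proof -
  have q: "real CARD('a) > 1" using q_ge2[where 'a='a] by simp
  show ?thesis using assms q by (simp add: absv_def qpowi_le_iff)
qed

lemma absv_less_iff:
  fixes x y :: "'a::{field,finite} fls"
  assumes "x \<noteq> 0" "y \<noteq> 0"
  shows "absv x < absv y \<longleftrightarrow> fls_subdegree y < fls_subdegree x"
proof -
  have q: "real CARD('a) > 1" using q_ge2[where 'a='a] by simp
  show ?thesis using assms q by (simp add: absv_def qpowi_less_iff)
qed

lemma absv_ultra: fixes x y :: "'a::{field,finite} fls" shows "absv (x + y) \<le> max (absv x) (absv y)"
proof (cases "x = 0 \<or> y = 0 \<or> x + y = 0")
  case True
  then show ?thesis by (auto simp: absv_ge0 max_def)
next
  case False
  hence "fls_subdegree (x + y) \<ge> min (fls_subdegree x) (fls_subdegree y)"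
    by (intro fls_plus_subdegree) auto
  then show ?thesis using False absv_le_iff[of "x+y" x] absv_le_iff[of "x+y" y]
    by (auto simp: max_def min_def split: if_splits)
qed

lemma absv_add_eq:
  fixes x y :: "'a::{field,finite} fls"
  assumes "absv y < absv x"
  shows "absv (x + y) = absv x"
proof (cases "y = 0")
  case False
  have "x \<noteq> 0" using assms absv_ge0[of y] by auto
  hence "fls_subdegree x < fls_subdegree y" using absv_less_iff[of y x] False assms by auto
  hence "fls_subdegree (x + y) = fls_subdegree x"
    using fls_subdegree_add_eq1[OF \<open>x\<noteq>0\<close>] by blast
  moreover have "x + y \<noteq> 0"
    using \<open>fls_subdegree x < fls_subdegree y\<close> \<open>x\<noteq>0\<close> by (metis add_eq_0_iff fls_uminus_subdegree less_irrefl)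
  ultimately show ?thesis using \<open>x\<noteq>0\<close> by (simp add: absv_def)
qed simp

lemma absv_diff_eq:
  fixes x y :: "'a::{field,finite} fls"
  assumes "absv y < absv x"
  shows "absv (x - y) = absv x"
  using absv_add_eq[of "-y" x] assms by simp

lemma absv_sum_le:
  assumes "\<And>a. a \<in> A \<Longrightarrow> absv ((f a)::'a::{field,finite} fls) \<le> B" "0 \<le> B"
  shows "absv (sum f A) \<le> B"
  using assms
proof (induction A rule: infinite_finite_induct)
  case (insert a A)
  have "absv (f a) \<le> B" "absv (sum f A) \<le> B" using insert by auto
  then show ?case using absv_ultra[of "f a" "sum f A"] insert(1,2) by simp
qed auto

lemma absv_sum_less:
  assumes "\<And>a. a \<in> A \<Longrightarrow> absv ((f a)::'a::{field,finite} fls) < B" "0 < B"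
  shows "absv (sum f A) < B"
  using assms
proof (induction A rule: infinite_finite_induct)
  case (insert a A)
  have "absv (f a) < B" "absv (sum f A) < B" using insert by auto
  then show ?case using absv_ultra[of "f a" "sum f A"] insert(1,2) by simp
qed auto

lemma absv_gap:
  fixes x y :: "'a::{field,finite} fls"
  assumes "absv x < absv y" "x \<noteq> 0"
  shows "real CARD('a) * absv x \<le> absv y"
proof -
  have y: "y \<noteq> 0" using assms absv_ge0[of x] by auto
  have q: "real CARD('a) > 1" using q_ge2[where 'a='a] by simp
  have lt: "fls_subdegree y < fls_subdegree x" using assms y absv_less_iff by blast
  have "real CARD('a) * absv x = real CARD('a) powi (1 - fls_subdegree x)"
    using assms q power_int_add[of "real CARD('a)" 1 "- fls_subdegree x"] by (simp add: absv_def)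
  also have "\<dots> \<le> real CARD('a) powi (- fls_subdegree y)"
    using lt q by (intro power_int_increasing) auto
  finally show ?thesis using y by (simp add: absv_def)
qed

lemma absv_small_nth:
  assumes "absv (x::'a::{field,finite} fls) < inverse (real CARD('a) ^ i)" "k \<le> int i"
  shows "fls_nth x k = 0"
proof (cases "x = 0")
  case False
  have q: "real CARD('a) > 1" using q_ge2[where 'a='a] by simp
  have "real CARD('a) powi (- fls_subdegree x) < real CARD('a) powi (- int i)"
    using assms False by (simp add: absv_def power_int_minus)
  hence "- fls_subdegree x < - int i" using q
    by (meson linorder_not_less power_int_increasing order.strict_iff_not)
  thus ?thesis using assms by simp
qed simp

lemma absv_nth_bound:
  assumes "\<And>k. k < int N \<Longrightarrow> fls_nth (x::'a::{field,finite} fls) k = 0"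
  shows "absv x \<le> inverse (real CARD('a) ^ N)"
proof (cases "x = 0")
  case False
  have q: "real CARD('a) > 1" using q_ge2[where 'a='a] by simp
  have "int N \<le> fls_subdegree x" using False assms by (intro fls_subdegree_geI) auto
  hence "real CARD('a) powi (- fls_subdegree x) \<le> real CARD('a) powi (- int N)"
    using q by (intro power_int_increasing) auto
  thus ?thesis using False by (simp add: absv_def power_int_minus)
qed simp




lemma card_power_same: "(x::'a::{field,finite}) ^ CARD('a) = x"
proof (cases "x = 0")
  case False
  have "x * (\<Prod>y\<in>UNIV-{0}. x * y) = x * x ^ (card (UNIV :: 'a set) - 1) * \<Prod>(UNIV-{0})"
    by (simp add: prod.distrib mult_ac)
  also have "x * x ^ (card (UNIV :: 'a set) - 1) = x ^ Suc (card (UNIV :: 'a set) - 1)"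
    by (subst power_Suc) auto
  also have "Suc (card (UNIV :: 'a set) - 1) = card (UNIV :: 'a set)"
    using finite_UNIV_card_ge_0[where ?'a = 'a] by simp
  also have "(\<Prod>y\<in>UNIV-{0}. x * y) = (\<Prod>y\<in>UNIV-{0}. y)"
    by (rule prod.reindex_bij_witness[of _ "\<lambda>y. y / x" "\<lambda>y. x * y"]) (use False in auto)
  finally show ?thesis
    by simp
qed (use finite_UNIV_card_ge_0[where ?'a = 'a] in auto)

lemma of_nat_card_fls: "(of_nat CARD('a) :: 'a::{field,finite} fls) = 0"
proof -
  have "(\<Sum>x\<in>(UNIV::'a set). x) = (\<Sum>x\<in>(UNIV::'a set). x + 1)"
    by (rule sum.reindex_bij_witness[of _ "\<lambda>x. x + 1" "\<lambda>x. x - 1"]) auto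
  hence "(of_nat CARD('a) :: 'a) = 0" by (simp add: sum.distrib)
  thus ?thesis by (simp add: fls_of_nat)
qed

lemma prod_poly_identity:
  "(\<Prod>c\<in>(UNIV::'a::{field,finite} set). [:fls_const c, 1:]) =
     (monom 1 CARD('a) - monom 1 1 :: 'a fls poly)"
  (is "?P = ?R")
proof (rule ccontr)
  assume ne: "?P \<noteq> ?R"
  define D where "D = ?P - ?R"
  have D0: "D \<noteq> 0" using ne by (simp add: D_def)
  have q2: "CARD('a) \<ge> 2" by (rule q_ge2)
  have degP: "degree ?P = CARD('a)"
    by (subst degree_prod_sum_eq) auto
  have lcP: "lead_coeff ?P = 1"
    by (simp add: lead_coeff_prod)
  have coeffP: "coeff ?P k = 0" if "k > CARD('a)" for k
    using that degP by (simp add: coeff_eq_0)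
  have "coeff D k = 0" if "k \<ge> CARD('a)" for k
  proof (cases "k = CARD('a)")
    case True
    then show ?thesis using lcP degP q2 by (simp add: D_def coeff_monom)
  next
    case False
    then show ?thesis using that coeffP q2 by (simp add: D_def coeff_monom)
  qed
  hence degD: "degree D \<le> CARD('a) - 1"
    by (intro degree_le) auto
  have "range fls_const \<subseteq> {x. poly D x = 0}"
  proof safe
    fix d :: 'a
    have "poly ?P (fls_const d) = 0"
      unfolding poly_prod
      by (rule prod_zero) (auto simp: fls_plus_const intro!: exI[where x = "-d"])
    moreover have "poly ?R (fls_const d) = 0"
      by (simp add: poly_monom fls_const_power[symmetric] card_power_same)
    ultimately show "poly D (fls_const d) = 0" by (simp add: D_def)
  qed
  hence "card (range (fls_const :: 'a \<Rightarrow> 'a fls)) \<le> card {x. poly D x = 0}"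
    by (intro card_mono poly_roots_finite D0)
  also have "\<dots> \<le> degree D" by (rule card_poly_roots_bound[OF D0])
  also have "card (range (fls_const :: 'a \<Rightarrow> 'a fls)) = CARD('a)"
  proof (rule card_image)
    show "inj_on (fls_const :: 'a \<Rightarrow> 'a fls) UNIV"
      by (rule inj_onI) (metis fls_const_nth)
  qed
  finally show False using degD q2 by simp
qed

lemma prod_eval: "(\<Prod>c\<in>(UNIV::'a::{field,finite} set). z + fls_const c) = z ^ CARD('a) - z"
proof -
  have "poly (\<Prod>c\<in>(UNIV::'a set). [:fls_const c, 1:]) z = poly (monom 1 CARD('a) - monom 1 1) z"
    by (simp only: prod_poly_identity)
  thus ?thesis by (simp add: poly_prod poly_monom add.commute)
qed

lemma deriv_eval:
  "(\<Sum>c\<in>(UNIV::'a::{field,finite} set). \<Prod>c'\<in>UNIV-{c}. z + fls_const c') = -1"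
proof -
  have "pderiv (\<Prod>c\<in>(UNIV::'a set). [:fls_const c, 1:]) = pderiv (monom 1 CARD('a) - monom 1 1)"
    by (simp only: prod_poly_identity)
  hence "(\<Sum>c\<in>(UNIV::'a set). \<Prod>c'\<in>UNIV-{c}. [:fls_const c', 1:]) = (- 1 :: 'a fls poly)"
    by (simp add: pderiv_prod pderiv_diff pderiv_monom of_nat_card_fls pderiv_pCons)
  hence "poly (\<Sum>c\<in>(UNIV::'a set). \<Prod>c'\<in>UNIV-{c}. [:fls_const c', 1:]) z = poly (- 1) z"
    by simp
  thus ?thesis by (simp add: poly_sum poly_prod add.commute)
qed

lemma frob_step: "(z + fls_const c) ^ CARD('a) = z ^ CARD('a) + fls_const (c::'a::{field,finite})"
proof -
  have "(\<Prod>d\<in>(UNIV::'a set). (z + fls_const c) + fls_const d) = (\<Prod>d\<in>(UNIV::'a set). z + fls_const d)"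
    by (rule prod.reindex_bij_witness[of _ "\<lambda>d. d - c" "\<lambda>d. c + d"])
       (auto simp: fls_plus_const[symmetric] add.assoc)
  hence "(z + fls_const c) ^ CARD('a) - (z + fls_const c) = z ^ CARD('a) - z"
    by (simp only: prod_eval)
  thus ?thesis by (simp add: algebra_simps)
qed

lemma frob_iter: "(z + fls_const c) ^ (CARD('a) ^ n) = z ^ (CARD('a) ^ n) + fls_const (c::'a::{field,finite})"
proof (induction n)
  case (Suc n)
  have "(z + fls_const c) ^ (CARD('a) ^ Suc n) = ((z + fls_const c) ^ (CARD('a) ^ n)) ^ CARD('a)"
    by (simp add: power_mult[symmetric] mult.commute)
  also have "\<dots> = (z ^ (CARD('a) ^ n)) ^ CARD('a) + fls_const c"
    by (simp add: Suc frob_step)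
  also have "(z ^ (CARD('a) ^ n)) ^ CARD('a) = z ^ (CARD('a) ^ Suc n)"
    by (simp add: power_mult[symmetric] mult.commute)
  finally show ?case .
qed simp

lemma inv_sum:
  fixes X :: "'a::{field,finite} fls"
  assumes "\<And>c. X + fls_const c \<noteq> 0"
  shows "(\<Sum>c\<in>UNIV. inverse (X + fls_const c)) = - inverse (X ^ CARD('a) - X)"
proof -
  define Pr where "Pr = (\<Prod>c\<in>(UNIV::'a set). X + fls_const c)"
  have Pr0: "Pr \<noteq> 0" using assms by (simp add: Pr_def)
  have "inverse (X + fls_const c) = (\<Prod>c'\<in>UNIV-{c}. X + fls_const c') / Pr" for c
  proof -
    have "Pr = (X + fls_const c) * (\<Prod>c'\<in>UNIV-{c}. X + fls_const c')"
      unfolding Pr_def by (rule prod.remove) auto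
    thus ?thesis using assms[of c] Pr0 by (simp add: field_simps)
  qed
  hence "(\<Sum>c\<in>UNIV. inverse (X + fls_const c)) = (\<Sum>c\<in>UNIV. \<Prod>c'\<in>UNIV-{c}. X + fls_const c') / Pr"
    by (simp add: sum_divide_distrib)
  also have "\<dots> = - inverse (X ^ CARD('a) - X)"
    by (simp add: deriv_eval Pr_def prod_eval divide_inverse)
  finally show ?thesis .
qed




definition gsum :: "'a::{field,finite} fls \<Rightarrow> nat \<Rightarrow> 'a fls" where
  "gsum y m = (\<Sum>c\<in>UNIV. inverse (y + fls_const c) ^ m)"

lemma gsum_absv:
  fixes y :: "'a::{field,finite} fls"
  assumes y1: "absv y > 1" and n1: "n \<ge> 1"
  shows "absv (gsum y (CARD('a) ^ n - 1)) = inverse (absv y ^ (CARD('a) ^ n * (CARD('a) - 1)))"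
proof -
  define q where "q = CARD('a)"
  define Q where "Q = q ^ n"
  have q2: "q \<ge> 2" unfolding q_def by (rule q_ge2)
  have Q2: "Q \<ge> 2"
  proof -
    have "q ^ 1 \<le> q ^ n" using n1 q2 by (intro power_increasing) auto
    thus ?thesis using q2 by (simp add: Q_def)
  qed
  define X where "X = y ^ Q"
  have hc: "absv (y + fls_const c) = absv y" for c
    using absv_const_le[of c] y1 by (intro absv_add_eq) auto
  have yc0: "y + fls_const c \<noteq> 0" for c
    using hc[of c] y1 by auto
  have Xc: "X + fls_const c = (y + fls_const c) ^ Q" for c
    by (simp add: X_def Q_def q_def frob_iter)
  have Xc0: "X + fls_const c \<noteq> 0" for c
    using Xc yc0 by simp
  have hterm: "inverse (y + fls_const c) ^ (Q - 1) = 1 + (y - X) * inverse (X + fls_const c)" for c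
  proof -
    define a where "a = y + fls_const c"
    have aQ: "a ^ Q = a * a ^ (Q - 1)"
      using Q2 by (metis Suc_diff_1 less_le_trans pos2 power_Suc)
    have "inverse a ^ (Q - 1) = a * inverse (a ^ Q)"
    proof -
      have a0: "a \<noteq> 0" using yc0[of c] by (simp add: a_def)
      show ?thesis by (simp add: aQ power_inverse a0 field_simps)
    qed
    also have "\<dots> = a * inverse (X + fls_const c)" by (simp add: Xc a_def)
    also have "a = (X + fls_const c) + (y - X)" by (simp add: a_def)
    finally show ?thesis using Xc0[of c] by (simp add: field_simps)
  qed
  have "gsum y (Q - 1) = (\<Sum>c\<in>UNIV. 1 + (y - X) * inverse (X + fls_const c))"
    unfolding gsum_def by (rule sum.cong[OF refl hterm])
  also have "\<dots> = of_nat q + (y - X) * (\<Sum>c\<in>UNIV. inverse (X + fls_const c))"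
    by (simp add: sum.distrib sum_distrib_left q_def)
  also have "\<dots> = (y - X) * (- inverse (X ^ q - X))"
    using Xc0 by (simp add: of_nat_card_fls q_def inv_sum)
  finally have geq: "gsum y (Q - 1) = (y - X) * (- inverse (X ^ q - X))" .
  define b where "b = absv y"
  have b1: "b > 1" using y1 b_def by simp
  have aX: "absv X = b ^ Q" by (simp add: X_def absv_power b_def)
  have bQ: "b < b ^ Q"
    using power_strict_increasing[of 1 Q b] b1 Q2 by simp
  have bQ1: "b ^ Q > 1" using b1 bQ by simp
  have "absv (y - X) = absv (X - y)"
    by (metis absv_uminus minus_diff_eq)
  also have "\<dots> = b ^ Q" using aX bQ b_def by (simp add: absv_diff_eq)
  finally have e1: "absv (y - X) = b ^ Q" .
  have "b ^ Q < (b ^ Q) ^ q"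
    using power_strict_increasing[of 1 q "b ^ Q"] bQ1 q2 by simp
  hence e2: "absv (X ^ q - X) = (b ^ Q) ^ q"
    using aX by (simp add: absv_diff_eq absv_power)
  have "absv (gsum y (Q - 1)) = b ^ Q * inverse ((b ^ Q) ^ q)"
    unfolding geq by (simp add: absv_mult absv_inverse e1 e2)
  also have "(b ^ Q) ^ q = b ^ Q * b ^ (Q * (q - 1))"
  proof -
    have "Q * q = Q + Q * (q - 1)" using q2 by (cases q) auto
    thus ?thesis by (simp add: power_mult[symmetric] power_add[symmetric])
  qed
  also have "b ^ Q * inverse (b ^ Q * b ^ (Q * (q - 1))) = inverse (b ^ (Q * (q - 1)))"
    using b1 by simp
  finally show ?thesis by (simp add: Q_def q_def b_def)
qed




lemma w_split:
  fixes \<alpha> :: "nat \<Rightarrow> 'a::{field,finite} fls"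
  assumes "i \<ge> 1" "\<alpha> 0 = 1"
  shows "(\<Sum>j<i. fls_const ((d(0:=a)) j) * \<alpha> j) =
         fls_const a + (\<Sum>j\<in>{..<i}-{0}. fls_const (d j) * \<alpha> j)"
proof -
  have "(\<Sum>j<i. fls_const ((d(0:=a)) j) * \<alpha> j) =
        fls_const ((d(0:=a)) 0) * \<alpha> 0 + (\<Sum>j\<in>{..<i}-{0}. fls_const ((d(0:=a)) j) * \<alpha> j)"
    using assms by (intro sum.remove) auto
  also have "(\<Sum>j\<in>{..<i}-{0}. fls_const ((d(0:=a)) j) * \<alpha> j) = (\<Sum>j\<in>{..<i}-{0}. fls_const (d j) * \<alpha> j)"
    by (intro sum.cong) auto
  finally show ?thesis using assms by simp
qed

definition S0 :: "nat \<Rightarrow> (nat \<Rightarrow> 'a::zero) set" where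
  "S0 i = {c \<in> {..<i} \<rightarrow>\<^sub>E (UNIV::'a set). c 0 = 0}"

lemma Omega_split:
  fixes \<alpha> :: "nat \<Rightarrow> 'a::{field,finite} fls"
  assumes i1: "i \<ge> 1" and a0: "\<alpha> 0 = 1"
  shows "Omega \<alpha> i m = (\<Sum>c\<in>S0 i. gsum (\<alpha> i + (\<Sum>j\<in>{..<i}-{0}. fls_const (c j) * \<alpha> j)) m)"
proof -
  define W where "W c = (\<Sum>j\<in>{..<i}-{0}. fls_const (c j) * \<alpha> j)" for c :: "nat \<Rightarrow> 'a"
  have "(\<Sum>c\<in>S0 i. gsum (\<alpha> i + W c) m) =
        (\<Sum>c\<in>S0 i. \<Sum>a\<in>UNIV. inverse (\<alpha> i + W c + fls_const a) ^ m)"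
    by (simp add: gsum_def)
  also have "\<dots> = (\<Sum>p\<in>S0 i \<times> UNIV. inverse (\<alpha> i + W (fst p) + fls_const (snd p)) ^ m)"
    by (subst sum.cartesian_product) (simp add: case_prod_beta)
  also have "\<dots> = Omega \<alpha> i m"
    unfolding Omega_def
  proof (rule sum.reindex_bij_witness[of _ "\<lambda>d. (d(0:=0), d 0)" "\<lambda>p. (fst p)(0 := snd p)"])
    fix d :: "nat \<Rightarrow> 'a" assume d: "d \<in> {..<i} \<rightarrow>\<^sub>E UNIV"
    show "(fst (d(0 := 0), d 0))(0 := snd (d(0 := 0), d 0)) = d" by simp
    show "(d(0 := 0), d 0) \<in> S0 i \<times> UNIV"
      using d i1 by (auto simp: S0_def PiE_iff extensional_def)
  next
    fix p :: "(nat \<Rightarrow> 'a) \<times> 'a" assume p: "p \<in> S0 i \<times> UNIV"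
    then obtain c a where pc: "p = (c, a)" and c: "c \<in> S0 i" by auto
    show "(((fst p)(0 := snd p))(0 := 0), ((fst p)(0 := snd p)) 0) = p"
    proof -
      have c0: "c 0 = 0" using c by (simp add: S0_def)
      show ?thesis unfolding pc using c0 by (simp add: fun_upd_idem)
    qed
    show "(fst p)(0 := snd p) \<in> {..<i} \<rightarrow>\<^sub>E UNIV"
      using c pc i1 by (auto simp: S0_def PiE_iff extensional_def)
    have "(\<Sum>j<i. fls_const (((fst p)(0 := snd p)) j) * \<alpha> j) = fls_const a + W c"
      unfolding W_def pc by (simp only: fst_conv snd_conv) (rule w_split[where \<alpha>=\<alpha>, OF i1 a0])
    then show "inverse ((\<Sum>j<i. fls_const (((fst p)(0 := snd p)) j) * \<alpha> j) + \<alpha> i) ^ m =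
         inverse (\<alpha> i + W (fst p) + fls_const (snd p)) ^ m"
    proof -
      have e: "(fls_const a + W c) + \<alpha> i = \<alpha> i + W c + fls_const a" by (simp add: algebra_simps)
      show ?thesis unfolding \<open>(\<Sum>j<i. fls_const (((fst p)(0 := snd p)) j) * \<alpha> j) = fls_const a + W c\<close> e
        by (simp only: pc fst_conv snd_conv)
    qed
  qed
  finally show ?thesis by (simp add: W_def)
qed

lemma alpha_mono:
  fixes \<alpha> :: "nat \<Rightarrow> 'a::{field,finite} fls"
  assumes H: "\<And>i. i \<ge> 1 \<Longrightarrow> absv (\<alpha> i) < absv (\<alpha> (Suc i))"
  shows "1 \<le> j \<Longrightarrow> j < i \<Longrightarrow> absv (\<alpha> j) < absv (\<alpha> i)"
proof (induction i)
  case (Suc i)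
  show ?case
  proof (cases "j = i")
    case True
    then show ?thesis using Suc.prems H[of i] by simp
  next
    case False
    hence "absv (\<alpha> j) < absv (\<alpha> i)" using Suc by simp
    also have "\<dots> < absv (\<alpha> (Suc i))" using Suc.prems False by (intro H) simp
    finally show ?thesis .
  qed
qed simp

lemma alpha_growth:
  fixes \<alpha> :: "nat \<Rightarrow> 'a::{field,finite} fls"
  assumes H: "\<And>i. i \<ge> 1 \<Longrightarrow> absv (\<alpha> i) < absv (\<alpha> (Suc i))" and a1: "1 < absv (\<alpha> 1)"
  shows "real CARD('a) ^ i * absv (\<alpha> 1) \<le> absv (\<alpha> (Suc i))"
proof (induction i)
  case (Suc i)
  have pos: "absv (\<alpha> (Suc i)) > 1"
  proof -
    have "1 \<le> real CARD('a) ^ i" using q_ge2[where 'a='a] by (intro one_le_power) simp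
    hence "absv (\<alpha> 1) \<le> real CARD('a) ^ i * absv (\<alpha> 1)"
      using a1 by (simp add: mult_le_cancel_right1)
    thus ?thesis using Suc.IH a1 by linarith
  qed
  have X: "real CARD('a) * absv (\<alpha> (Suc i)) \<le> absv (\<alpha> (Suc (Suc i)))"
    using pos H[of "Suc i"] by (intro absv_gap) auto
  have Y: "real CARD('a) * (real CARD('a) ^ i * absv (\<alpha> 1)) \<le> real CARD('a) * absv (\<alpha> (Suc i))"
    using Suc.IH by (intro mult_left_mono) auto
  have "real CARD('a) ^ Suc i * absv (\<alpha> 1) = real CARD('a) * (real CARD('a) ^ i * absv (\<alpha> 1))"
    by (simp add: mult.assoc)
  also have "\<dots> \<le> absv (\<alpha> (Suc (Suc i)))" using X Y by linarith
  finally show ?case .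
qed simp




lemma S0_1: "S0 1 = {(\<lambda>j. if j = 0 then (0::'a::zero) else undefined)}"
proof (rule set_eqI, rule iffI)
  fix c :: "nat \<Rightarrow> 'a" assume c: "c \<in> S0 1"
  have cP: "c \<in> {..<1} \<rightarrow>\<^sub>E UNIV" and c0: "c 0 = 0" using c unfolding S0_def by auto
  have "c j = (if j = 0 then 0 else undefined)" for j
  proof (cases "j = 0")
    case True then show ?thesis using c0 by simp
  next
    case False
    have "j \<notin> {..<1}" using False by simp
    from PiE_arb[OF cP this] show ?thesis using False by simp
  qed
  hence "c = (\<lambda>j. if j = 0 then 0 else undefined)" by (rule ext)
  thus "c \<in> {(\<lambda>j. if j = 0 then 0 else undefined)}" by (rule ssubst) (rule singletonI)
next
  fix c :: "nat \<Rightarrow> 'a" assume "c \<in> {(\<lambda>j. if j = 0 then 0 else undefined)}"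
  hence c: "c = (\<lambda>j. if j = 0 then 0 else undefined)" by (rule singletonD)
  have "c \<in> {..<1} \<rightarrow>\<^sub>E UNIV" unfolding c PiE_iff extensional_def by simp
  moreover have "c 0 = 0" unfolding c by simp
  ultimately show "c \<in> S0 1" unfolding S0_def by blast
qed

lemma Omega_1:
  fixes \<alpha> :: "nat \<Rightarrow> 'a::{field,finite} fls"
  assumes "\<alpha> 0 = 1"
  shows "Omega \<alpha> 1 m = gsum (\<alpha> 1) m"
proof -
  have "Omega \<alpha> 1 m = (\<Sum>c\<in>S0 1. gsum (\<alpha> 1 + (\<Sum>j\<in>{..<1}-{0}. fls_const (c j) * \<alpha> j)) m)"
    using assms by (intro Omega_split) auto
  also have "{..<1::nat}-{0} = {}" by auto
  finally show ?thesis using S0_1[where 'a='a] by simp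
qed

lemma alpha_gt1:
  fixes \<alpha> :: "nat \<Rightarrow> 'a::{field,finite} fls"
  assumes H: "\<And>i. i \<ge> 1 \<Longrightarrow> absv (\<alpha> i) < absv (\<alpha> (Suc i))" and a1: "1 < absv (\<alpha> 1)"
    and i: "i \<ge> 1"
  shows "absv (\<alpha> i) > 1"
proof (cases "i = 1")
  case False
  hence "absv (\<alpha> 1) < absv (\<alpha> i)" using i by (intro alpha_mono[where \<alpha>=\<alpha>, OF H]) auto
  thus ?thesis using a1 by simp
qed (use a1 in simp)

lemma Omega_bound:
  fixes \<alpha> :: "nat \<Rightarrow> 'a::{field,finite} fls"
  assumes H: "\<And>i. i \<ge> 1 \<Longrightarrow> absv (\<alpha> i) < absv (\<alpha> (Suc i))" and a1: "1 < absv (\<alpha> 1)"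
    and a0: "\<alpha> 0 = 1" and i: "i \<ge> 1" and n: "n \<ge> 1"
  shows "absv (Omega \<alpha> i (CARD('a) ^ n - 1)) \<le> inverse (absv (\<alpha> i) ^ (CARD('a) ^ n * (CARD('a) - 1)))"
proof -
  have ai: "absv (\<alpha> i) > 1" by (rule alpha_gt1[OF H a1 i])
  have "absv (gsum (\<alpha> i + (\<Sum>j\<in>{..<i}-{0}. fls_const (c j) * \<alpha> j)) (CARD('a) ^ n - 1))
        \<le> inverse (absv (\<alpha> i) ^ (CARD('a) ^ n * (CARD('a) - 1)))" for c :: "nat \<Rightarrow> 'a"
  proof -
    have "absv (\<Sum>j\<in>{..<i}-{0}. fls_const (c j) * \<alpha> j) < absv (\<alpha> i)"
    proof (rule absv_sum_less)
      fix j assume j: "j \<in> {..<i}-{0}"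
      have "absv (fls_const (c j) * \<alpha> j) \<le> absv (\<alpha> j)"
        using absv_const_le[of "c j"] absv_ge0[of "\<alpha> j"]
        using mult_right_mono[of "absv (fls_const (c j))" 1 "absv (\<alpha> j)"] by (simp add: absv_mult)
      also have "\<dots> < absv (\<alpha> i)" using j by (intro alpha_mono[where \<alpha>=\<alpha>, OF H]) auto
      finally show "absv (fls_const (c j) * \<alpha> j) < absv (\<alpha> i)" .
    qed (use ai in simp)
    hence e: "absv (\<alpha> i + (\<Sum>j\<in>{..<i}-{0}. fls_const (c j) * \<alpha> j)) = absv (\<alpha> i)"
      by (rule absv_add_eq)
    show ?thesis using gsum_absv[of "\<alpha> i + (\<Sum>j\<in>{..<i}-{0}. fls_const (c j) * \<alpha> j)" n] e ai n
      by simp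
  qed
  thus ?thesis
    unfolding Omega_split[where \<alpha>=\<alpha>, OF i a0] using ai by (intro absv_sum_le) auto
qed




theorem corollary1:
  fixes a :: "'a::{field,finite} poly" and b :: 'a and f :: "'a fls"
    and I :: "'a fls set" and \<alpha> :: "nat \<Rightarrow> 'a fls" and n :: nat
  assumes "lead_coeff a = 1" and "degree a \<ge> 1" and "b \<noteq> 0"
    and "f \<notin> kfield" and "f ^ 2 - polyT a * f - fls_const b = 0"
    and "absv f = real CARD('a) ^ degree a"
    and "fractional_ideal (Ainf1 f (degree a)) (Kfield f) I"
    and "Fq_basis \<alpha> I" and "\<alpha> 0 = 1" and "1 < absv (\<alpha> 1)"
    and "\<And>i. i \<ge> 1 \<Longrightarrow> absv (\<alpha> i) < absv (\<alpha> (Suc i))"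
    and "n \<ge> 1"
  shows "\<exists>Z. fls_sums (\<lambda>i. Omega \<alpha> (Suc i) (CARD('a) ^ n - 1)) Z \<and>
           absv Z = absv (Omega \<alpha> 1 (CARD('a) ^ n - 1)) \<and>
           absv (Omega \<alpha> 1 (CARD('a) ^ n - 1))
             = absv (\<alpha> 1) powi (int (CARD('a) ^ n) * (1 - int CARD('a))) \<and>
           absv (\<alpha> 1) powi (int (CARD('a) ^ n) * (1 - int CARD('a))) < 1"
proof -
  note a0 = assms(9) and a1 = assms(10) and H = assms(11) and n1 = assms(12)
  define K where "K = CARD('a) ^ n * (CARD('a) - 1)"
  define t where "t i = Omega \<alpha> (Suc i) (CARD('a) ^ n - 1)" for i
  define S where "S N = (\<Sum>i<N. t i)" for N
  define B where "B i = inverse (absv (\<alpha> i) ^ K)" for i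
  have q2: "CARD('a) \<ge> 2" by (rule q_ge2)
  have qr: "real CARD('a) > 1" using q2 by simp
  have K1: "K \<ge> 1"
  proof -
    have "CARD('a) ^ n \<ge> 1" using q2 by (simp add: Suc_le_eq)
    moreover have "CARD('a) - 1 \<ge> 1" using q2 by simp
    ultimately show ?thesis unfolding K_def using mult_le_mono[of 1 "CARD('a) ^ n" 1 "CARD('a) - 1"] by simp
  qed
  have agt: "absv (\<alpha> i) > 1" if "i \<ge> 1" for i
    by (rule alpha_gt1[OF H a1 that])
  have Bpos: "B i > 0" if "i \<ge> 1" for i
    using agt[OF that] by (simp add: B_def)
  have t0: "absv (t 0) = B 1"
  proof -
    have "t 0 = gsum (\<alpha> 1) (CARD('a) ^ n - 1)"
      unfolding t_def using Omega_1[where \<alpha>=\<alpha>, OF a0] by simp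
    thus ?thesis using gsum_absv[OF a1 n1] by (simp add: B_def K_def)
  qed
  have tb: "absv (t i) \<le> B (Suc i)" for i
    unfolding t_def B_def K_def using Omega_bound[where \<alpha>=\<alpha> and i="Suc i", OF H a1 a0 _ n1] by simp
  have Blt: "B (Suc i) < B 1" if "i \<ge> 1" for i
  proof -
    have "absv (\<alpha> 1) < absv (\<alpha> (Suc i))" using that by (intro alpha_mono[where \<alpha>=\<alpha>, OF H]) auto
    hence "absv (\<alpha> 1) ^ K < absv (\<alpha> (Suc i)) ^ K"
      using K1 a1 by (intro power_strict_mono) auto
    thus ?thesis unfolding B_def using a1 by (intro less_imp_inverse_less) auto
  qed
  have tsmall: "absv (t i) < inverse (real CARD('a) ^ i)" for i
  proof -
    define x where "x = absv (\<alpha> (Suc i))"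
    have x1: "x > 1" using agt[of "Suc i"] by (simp add: x_def)
    have "x ^ 1 \<le> x ^ K" using x1 K1 by (intro power_increasing) auto
    hence "B (Suc i) \<le> inverse x" unfolding B_def x_def[symmetric] using x1
      by (intro le_imp_inverse_le) auto
    moreover have "real CARD('a) ^ i < x"
    proof -
      have "real CARD('a) ^ i * absv (\<alpha> 1) \<le> x" unfolding x_def by (rule alpha_growth[OF H a1])
      moreover have "real CARD('a) ^ i < real CARD('a) ^ i * absv (\<alpha> 1)"
        using a1 qr by simp
      ultimately show ?thesis by linarith
    qed
    hence "inverse x < inverse (real CARD('a) ^ i)"
      using qr by (intro less_imp_inverse_less) auto
    ultimately show ?thesis using tb[of i] by simp
  qed
  have tnth: "fls_nth (t i) k = 0" if "k \<le> int i" for i k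
    by (rule absv_small_nth[OF tsmall that])
  have stab: "fls_nth (S N) k = fls_nth (S M) k" if "M \<le> N" "k < int M" for M N k
    using that(1)
  proof (induction N rule: dec_induct)
    case (step N)
    have "fls_nth (t N) k = 0" using step(1) that(2) by (intro tnth) simp
    thus ?case using step by (simp add: S_def)
  qed simp
  define z where "z k = fls_nth (S (nat k + 1)) k" for k
  define Z where "Z = Abs_fls z"
  have S1: "S 1 = t 0" by (simp add: S_def)
  have Znth: "fls_nth Z k = z k" for k
    unfolding Z_def
  proof (rule nth_Abs_fls_ex_lower_bound)
    show "\<exists>N. \<forall>k<N. z k = 0"
    proof (intro exI allI impI)
      fix k assume k: "k < min 0 (fls_subdegree (t 0))"
      hence "nat k + 1 = 1" by simp
      hence "z k = fls_nth (S 1) k" by (simp add: z_def)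
      hence "z k = fls_nth (t 0) k" by (simp only: S1)
      thus "z k = 0" using k by simp
    qed
  qed
  have ZS: "fls_nth (Z - S N) k = 0" if "N \<ge> 1" "k < int N" for N k
  proof -
    have "fls_nth (S N) k = fls_nth (S (nat k + 1)) k"
      using that by (intro stab) auto
    thus ?thesis by (simp add: Znth z_def)
  qed
  have Zb: "absv (Z - S N) \<le> inverse (real CARD('a) ^ N)" if "N \<ge> 1" for N
    using ZS[OF that] by (intro absv_nth_bound) auto
  have invlim: "(\<lambda>N. inverse (real CARD('a) ^ N)) \<longlonglongrightarrow> 0"
    by (rule LIMSEQ_inverse_realpow_zero[OF qr])
  have lim: "(\<lambda>N. absv (Z - S N)) \<longlonglongrightarrow> 0"
  proof (rule tendsto_sandwich[OF _ _ tendsto_const invlim])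
    show "\<forall>\<^sub>F N in sequentially. 0 \<le> absv (Z - S N)" by (simp add: absv_ge0)
    show "\<forall>\<^sub>F N in sequentially. absv (Z - S N) \<le> inverse (real CARD('a) ^ N)"
      using Zb by (intro eventually_sequentiallyI[of 1]) auto
  qed
  have "\<forall>\<^sub>F N in sequentially. inverse (real CARD('a) ^ N) < B 1"
    using order_tendstoD(2)[OF invlim Bpos[of 1]] by simp
  then obtain N0 where N0: "\<And>N. N \<ge> N0 \<Longrightarrow> inverse (real CARD('a) ^ N) < B 1"
    by (auto simp: eventually_sequentially)
  define N where "N = Suc N0"
  have NB: "inverse (real CARD('a) ^ N) < B 1" using N0[of N] by (simp add: N_def)
  have SN: "S N = t 0 + (\<Sum>i<N0. t (Suc i))"
    unfolding S_def N_def by (rule sum.lessThan_Suc_shift)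
  have "absv (\<Sum>i<N0. t (Suc i)) < B 1"
  proof (rule absv_sum_less)
    fix i assume "i \<in> {..<N0}"
    show "absv (t (Suc i)) < B 1" using tb[of "Suc i"] Blt[of "Suc i"] by simp
  qed (use Bpos[of 1] in simp)
  hence aSN: "absv (S N) = B 1" unfolding SN using t0 by (simp add: absv_add_eq)
  have "absv (Z - S N) < absv (S N)" using Zb[of N] NB aSN by (simp add: N_def)
  hence "absv (S N + (Z - S N)) = absv (S N)" by (rule absv_add_eq)
  hence aZ: "absv Z = B 1" using aSN by simp
  have pw: "absv (\<alpha> 1) powi (int (CARD('a) ^ n) * (1 - int CARD('a))) = B 1"
  proof -
    have "int (CARD('a) ^ n) * (1 - int CARD('a)) = - int K"
      using q2 by (simp add: K_def of_nat_diff algebra_simps)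
    thus ?thesis by (simp add: B_def power_int_minus)
  qed
  have B1: "B 1 < 1"
  proof -
    have "1 < absv (\<alpha> 1) ^ K" using a1 K1 by (intro one_less_power) auto
    thus ?thesis using less_imp_inverse_less[of 1 "absv (\<alpha> 1) ^ K"] by (simp add: B_def)
  qed
  show ?thesis
  proof (intro exI conjI)
    show "fls_sums (\<lambda>i. Omega \<alpha> (Suc i) (CARD('a) ^ n - 1)) Z"
      using lim unfolding fls_sums_def S_def t_def .
    show "absv Z = absv (Omega \<alpha> 1 (CARD('a) ^ n - 1))"
      using aZ t0 by (simp add: t_def)
    show "absv (Omega \<alpha> 1 (CARD('a) ^ n - 1)) = absv (\<alpha> 1) powi (int (CARD('a) ^ n) * (1 - int CARD('a)))"
      using t0 pw by (simp add: t_def)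
    show "absv (\<alpha> 1) powi (int (CARD('a) ^ n) * (1 - int CARD('a))) < 1"
      using pw B1 by simp
  qed
qed


end
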